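(* Let $h\geq 3$. For each $(r,s)\in\{(0,2),(4,0)\}$ there exists a $(K_2,S(C_h))$-URGDD$(r,s)$ of $C_{h(2)}$.
   Context: For integers $m,n$, $C_{m(n)}$ is the graph with vertex set $X^1\cup\cdots\cup X^m$, where the $X^i$ are pairwise disjoint sets of size $n$, and edge set $\{\{u,w\}: u\in X^i, w\in X^j, |i-j|\equiv 1\pmod m\}$. For $h\geq3$, an $h$-sun is the graph on $2h$ distinct vertices $a_1,\ldots,a_h,b_1,\ldots,b_h$ consisting of the $h$-cycle $(a_1,\ldots,a_h)$ together with the edges $\{a_i,b_i\}$, $i=1,\ldots,h$. A $(K_2,S(C_h))$-URGDD$(r,s)$ of $C_{m(n)}$ is a partition of the edge set of $C_{m(n)}$ into $r$ classes each of which is a perfect matching of $C_{m(n)}$ and $s$ classes each of which is a set of vertex-disjoint $h$-suns (subgraphs of $C_{m(n)}$) covering every vertex exactly once. *)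

theory Defs
  imports Main
begin

text \<open>The graph C_{m(n)}: vertex (i,x) means the x-th element of the part X^(i+1),
  with parts indexed 0..m-1 and elements 0..n-1.  Edges join vertices in parts
  i, j with i - j = +1 or -1 modulo m (cyclic adjacency of parts).\<close>

definition cmn_vertices :: "nat \<Rightarrow> nat \<Rightarrow> (nat \<times> nat) set" where
  "cmn_vertices m n = {0..<m} \<times> {0..<n}"

definition cmn_edges :: "nat \<Rightarrow> nat \<Rightarrow> (nat \<times> nat) set set" where
  "cmn_edges m n = {{u, w} | u w. u \<in> cmn_vertices m n \<and> w \<in> cmn_vertices m n \<and>
      ((int (fst u) - int (fst w)) mod int m = 1 \<or>
       (int (fst u) - int (fst w)) mod int m = int m - 1)}"

definition perfect_matching :: "'v set \<Rightarrow> 'v set set \<Rightarrow> 'v set set \<Rightarrow> bool" where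
  "perfect_matching V E M \<longleftrightarrow> M \<subseteq> E \<and>
     (\<forall>e\<in>M. \<forall>e'\<in>M. e \<noteq> e' \<longrightarrow> e \<inter> e' = {}) \<and> \<Union>M = V"

definition is_sun :: "nat \<Rightarrow> 'v set set \<Rightarrow> bool" where
  "is_sun h T \<longleftrightarrow> (\<exists>as bs. length as = h \<and> length bs = h \<and> distinct (as @ bs) \<and>
     T = {{as ! i, as ! ((i + 1) mod h)} | i. i < h} \<union> {{as ! i, bs ! i} | i. i < h})"

definition sun_class :: "nat \<Rightarrow> 'v set \<Rightarrow> 'v set set \<Rightarrow> 'v set set \<Rightarrow> bool" where
  "sun_class h V E C \<longleftrightarrow> (\<exists>\<S>. (\<forall>T\<in>\<S>. is_sun h T \<and> T \<subseteq> E) \<and>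
     (\<forall>T\<in>\<S>. \<forall>T'\<in>\<S>. T \<noteq> T' \<longrightarrow> \<Union>T \<inter> \<Union>T' = {}) \<and>
     \<Union>(\<Union>\<S>) = V \<and> C = \<Union>\<S>)"

definition urgdd :: "nat \<Rightarrow> nat \<Rightarrow> nat \<Rightarrow> 'v set \<Rightarrow> 'v set set \<Rightarrow> bool" where
  "urgdd h r s V E \<longleftrightarrow> (\<exists>Ms Ss. length Ms = r \<and> length Ss = s \<and>
     (\<forall>M\<in>set Ms. perfect_matching V E M) \<and> (\<forall>S\<in>set Ss. sun_class h V E S) \<and>
     (\<forall>i < r + s. \<forall>j < r + s. i \<noteq> j \<longrightarrow> (Ms @ Ss) ! i \<inter> (Ms @ Ss) ! j = {}) \<and>
     \<Union>(set (Ms @ Ss)) = E)"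

end

theory Submission
  imports Defs
begin

definition sc :: "nat \<Rightarrow> nat \<Rightarrow> nat" where "sc h i = Suc i mod h"

lemma sc_lt: "h \<ge> 3 \<Longrightarrow> sc h i < h" by (simp add: sc_def)

lemma sc_cases: "i < h \<Longrightarrow> (i + 1 < h \<and> sc h i = i + 1) \<or> (i = h - 1 \<and> sc h i = 0)"
proof -
  assume a: "i < h"
  show ?thesis
  proof (cases "Suc i < h")
    case True
    then have "sc h i = i + 1" unfolding sc_def by simp
    then show ?thesis using True by simp
  next
    case False
    then have e: "Suc i = h" using a by simp
    then have "sc h i = 0" unfolding sc_def by simp
    moreover have "i = h - 1" using e by simp
    ultimately show ?thesis by blast
  qed
qed

lemma sc_inj: "i < h \<Longrightarrow> j < h \<Longrightarrow> sc h i = sc h j \<Longrightarrow> i = j"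
  using sc_cases[of i h] sc_cases[of j h] by auto

lemma sc_neq: "h \<ge> 3 \<Longrightarrow> i < h \<Longrightarrow> sc h i \<noteq> i"
  using sc_cases[of i h] by auto

lemma no2: "h \<ge> 3 \<Longrightarrow> i < h \<Longrightarrow> j < h \<Longrightarrow> i = sc h j \<Longrightarrow> j = sc h i \<Longrightarrow> False"
proof -
  assume a: "h \<ge> 3" "i < h" "j < h" "i = sc h j" "j = sc h i"
  from sc_cases[OF a(2)] sc_cases[OF a(3)] a(1,4,5) show False
    by (elim disjE conjE) linarith+
qed

lemma sc_pred: "h \<ge> 3 \<Longrightarrow> i < h \<Longrightarrow> sc h ((i + h - 1) mod h) = i \<and> (i + h - 1) mod h < h"
proof -
  assume a: "h \<ge> 3" "i < h"
  show ?thesis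
  proof (cases "i = 0")
    case True
    have "(i + h - 1) mod h = h - 1" using True a by simp
    moreover have "sc h (h - 1) = 0" using a unfolding sc_def by simp
    ultimately show ?thesis using True a by simp
  next
    case False
    have e: "i + h - 1 = (i - 1) + h" using False by arith
    have "(i + h - 1) mod h = ((i - 1) + h) mod h" by (simp only: e)
    also have "\<dots> = (i - 1) mod h" by (rule mod_add_self2)
    also have "\<dots> = i - 1" using a by simp
    finally have m: "(i + h - 1) mod h = i - 1" .
    have "sc h (i - 1) = i" using False a unfolding sc_def by simp
    then show ?thesis using m a by simp
  qed
qed

lemma diff1:
  assumes "a < h" "b < h" "h \<ge> 3"
  shows "(int a - int b) mod int h = 1 \<longleftrightarrow> a = sc h b"
proof (cases "b \<le> a")
  case True
  have "(int a - int b) mod int h = int a - int b"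
    by (rule mod_pos_pos_trivial) (use assms True in auto)
  then show ?thesis using assms True sc_cases[of b h] by auto
next
  case False
  have "(int a - int b) mod int h = (int a - int b + int h) mod int h" by simp
  also have "\<dots> = int a - int b + int h"
    by (rule mod_pos_pos_trivial) (use assms False in auto)
  finally show ?thesis using assms False sc_cases[of b h] by auto
qed

lemma diff2:
  assumes "a < h" "b < h" "h \<ge> 3"
  shows "(int a - int b) mod int h = int h - 1 \<longleftrightarrow> b = sc h a"
proof (cases "b \<le> a")
  case True
  have "(int a - int b) mod int h = int a - int b"
    by (rule mod_pos_pos_trivial) (use assms True in auto)
  then show ?thesis using assms True sc_cases[of a h] by auto
next
  case False
  have "(int a - int b) mod int h = (int a - int b + int h) mod int h" by simp
  also have "\<dots> = int a - int b + int h"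
    by (rule mod_pos_pos_trivial) (use assms False in auto)
  finally show ?thesis using assms False sc_cases[of a h] by auto
qed

lemma E_char:
  assumes "h \<ge> 3"
  shows "cmn_edges h 2 = {{(i,x::nat),(sc h i,y)} | i x y. i < h \<and> x < 2 \<and> y < 2}"
proof
  show "cmn_edges h 2 \<subseteq> {{(i,x::nat),(sc h i,y)} | i x y. i < h \<and> x < 2 \<and> y < 2}"
  proof
    fix e :: "(nat \<times> nat) set" assume "e \<in> cmn_edges h 2"
    then obtain a x b y where e: "e = {(a,x),(b,y)}" "a < h" "b < h" "x < 2" "y < 2"
      "(int a - int b) mod int h = 1 \<or> (int a - int b) mod int h = int h - 1"
      unfolding cmn_edges_def cmn_vertices_def by auto
    then have "a = sc h b \<or> b = sc h a" using diff1 diff2 assms by blast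
    then show "e \<in> {{(i,x),(sc h i,y)} | i x y. i < h \<and> x < 2 \<and> y < 2}"
    proof
      assume "a = sc h b"
      then have "e = {(b,y),(sc h b,x)}" using e(1) by (simp add: insert_commute)
      then show ?thesis using e(3,4,5) by blast
    next
      assume "b = sc h a"
      then have "e = {(a,x),(sc h a,y)}" using e(1) by simp
      then show ?thesis using e(2,4,5) by blast
    qed
  qed
next
  show "{{(i,x::nat),(sc h i,y)} | i x y. i < h \<and> x < 2 \<and> y < 2} \<subseteq> cmn_edges h 2"
  proof
    fix e :: "(nat \<times> nat) set" assume "e \<in> {{(i,x),(sc h i,y)} | i x y. i < h \<and> x < 2 \<and> y < 2}"
    then obtain i x y where e: "e = {(i,x::nat),(sc h i,y::nat)}" "i < h" "x < 2" "y < 2" by auto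
    have "(int (sc h i) - int i) mod int h = 1" using diff1[of "sc h i" h i] sc_lt assms e by auto
    then have "\<exists>u w. e = {u, w} \<and> u \<in> cmn_vertices h 2 \<and> w \<in> cmn_vertices h 2 \<and>
      ((int (fst u) - int (fst w)) mod int h = 1 \<or> (int (fst u) - int (fst w)) mod int h = int h - 1)"
      using e sc_lt[OF assms] unfolding cmn_vertices_def
      by (intro exI[of _ "(sc h i, y)"] exI[of _ "(i, x)"]) (simp add: insert_commute)
    then show "e \<in> cmn_edges h 2" unfolding cmn_edges_def by (simp only: mem_Collect_eq)
  qed
qed


definition medge :: "nat \<Rightarrow> (nat \<Rightarrow> nat) \<Rightarrow> nat \<Rightarrow> (nat \<times> nat) set" where
  "medge h g i = {(i, g i), (sc h i, 1 - g (sc h i))}"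

lemma medge_eq:
  assumes "h \<ge> 3" "i < h" "j < h" "medge h g i = medge h g' j"
  shows "i = j"
proof (rule ccontr)
  assume ne: "i \<noteq> j"
  have "(i, g i) \<in> medge h g i" by (simp add: medge_def)
  then have "(i, g i) \<in> medge h g' j" using assms(4) by metis
  then have "i = sc h j" using ne by (auto simp: medge_def)
  have "(sc h i, 1 - g (sc h i)) \<in> medge h g i" by (simp add: medge_def)
  then have "(sc h i, 1 - g (sc h i)) \<in> medge h g' j" using assms(4) by metis
  then have "sc h i = j \<or> sc h i = sc h j" by (auto simp: medge_def)
  then have "sc h i = j" using sc_inj[OF assms(2,3)] ne by blast
  then show False using no2[OF assms(1,2,3)] \<open>i = sc h j\<close> by blast
qed

lemma pm:
  assumes h: "h \<ge> 3" and g: "\<And>i. i < h \<Longrightarrow> g i < 2"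
  shows "perfect_matching (cmn_vertices h 2) (cmn_edges h 2) (medge h g ` {..<h})"
  unfolding perfect_matching_def
proof (intro conjI)
  show "medge h g ` {..<h} \<subseteq> cmn_edges h 2"
  proof
    fix e assume "e \<in> medge h g ` {..<h}"
    then obtain i where i: "i < h" "e = medge h g i" by auto
    have "g i < 2" "1 - g (sc h i) < 2" using g i by auto
    then show "e \<in> cmn_edges h 2" unfolding E_char[OF h] using i
      by (auto simp: medge_def)
  qed
next
  show "\<forall>e\<in>medge h g ` {..<h}. \<forall>e'\<in>medge h g ` {..<h}. e \<noteq> e' \<longrightarrow> e \<inter> e' = {}"
  proof (intro ballI impI)
    fix e e' assume "e \<in> medge h g ` {..<h}" "e' \<in> medge h g ` {..<h}" "e \<noteq> e'"
    then obtain i j where ij: "i < h" "j < h" "e = medge h g i" "e' = medge h g j" "i \<noteq> j" by auto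
    have gi: "g i < 2" "g j < 2" "g (sc h i) < 2" "g (sc h j) < 2" using g ij sc_lt[OF h] by auto
    have n1: "sc h i \<noteq> sc h j" using sc_inj ij by blast
    have c: "g k \<noteq> Suc 0 - g k" if "k < h" for k using g[OF that] by arith
    have c1: "g (sc h j) \<noteq> Suc 0 - g (sc h j)" "g (sc h i) \<noteq> Suc 0 - g (sc h i)"
      using c sc_lt[OF h] by auto
    show "e \<inter> e' = {}" using ij n1 c1 by (auto simp: medge_def)
  qed
next
  show "\<Union> (medge h g ` {..<h}) = cmn_vertices h 2"
  proof
    show "\<Union> (medge h g ` {..<h}) \<subseteq> cmn_vertices h 2"
      using g sc_lt[OF h] by (fastforce simp: medge_def cmn_vertices_def)
  next
    show "cmn_vertices h 2 \<subseteq> \<Union> (medge h g ` {..<h})"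
    proof
      fix v assume "v \<in> cmn_vertices h 2"
      then obtain i x where v: "v = (i, x)" "i < h" "x < 2" by (auto simp: cmn_vertices_def)
      show "v \<in> \<Union> (medge h g ` {..<h})"
      proof (cases "x = g i")
        case True
        then show ?thesis using v by (auto simp: medge_def)
      next
        case False
        define j where "j = (i + h - 1) mod h"
        have j: "sc h j = i" "j < h" using sc_pred[OF h v(2)] j_def by auto
        have "x = 1 - g i" using False g[OF v(2)] v(3) by auto
        then have "v \<in> medge h g j" using j v by (simp add: medge_def)
        then show ?thesis using j by auto
      qed
    qed
  qed
qed

lemma pm_disj:
  assumes h: "h \<ge> 3" and g: "\<And>i. i < h \<Longrightarrow> g i < 2 \<and> g' i < 2"
    and orth: "\<And>i. i < h \<Longrightarrow> \<not> (g i = g' i \<and> g (sc h i) = g' (sc h i))"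
  shows "medge h g ` {..<h} \<inter> medge h g' ` {..<h} = {}"
proof (rule ccontr)
  assume "medge h g ` {..<h} \<inter> medge h g' ` {..<h} \<noteq> {}"
  then obtain i j where ij: "i < h" "j < h" "medge h g i = medge h g' j" by auto
  then have "i = j" using medge_eq h by blast
  have s: "sc h i \<noteq> i" using sc_neq h ij by blast
  have g2: "g (sc h i) < 2" "g' (sc h i) < 2" using g sc_lt[OF h] by auto
  have "(i, g i) \<in> medge h g i" by (simp add: medge_def)
  then have "(i, g i) \<in> medge h g' i" using ij \<open>i = j\<close> by metis
  then have e1: "g i = g' i" using s by (auto simp: medge_def)
  have "(sc h i, 1 - g (sc h i)) \<in> medge h g i" by (simp add: medge_def)
  then have "(sc h i, 1 - g (sc h i)) \<in> medge h g' i" using ij \<open>i = j\<close> by metis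
  then have "1 - g (sc h i) = 1 - g' (sc h i)" using s by (auto simp: medge_def)
  then have "g (sc h i) = g' (sc h i)" using g2 by auto
  then show False using orth[OF ij(1)] e1 by blast
qed

lemma bit_cases: "(p::nat) < 2 \<Longrightarrow> p = 0 \<or> p = 1" by auto

lemma mc1: "(p::nat) < 2 \<Longrightarrow> q < 2 \<Longrightarrow> q' < 2 \<Longrightarrow> (p + q) mod 2 = (p + q') mod 2 \<Longrightarrow> q = q'"
  using bit_cases[of p] bit_cases[of q] bit_cases[of q'] by auto

lemma mc2: "(p::nat) < 2 \<Longrightarrow> p' < 2 \<Longrightarrow> q < 2 \<Longrightarrow> (p + q) mod 2 = (p' + q) mod 2 \<Longrightarrow> p = p'"
  using bit_cases[of p] bit_cases[of p'] bit_cases[of q] by auto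

lemma mc3: "(x::nat) < 2 \<Longrightarrow> z < 2 \<Longrightarrow> (z + (x + z) mod 2) mod 2 = x"
  using bit_cases[of x] bit_cases[of z] by auto

lemma mc4: "(x::nat) < 2 \<Longrightarrow> z < 2 \<Longrightarrow> (x + (x + z) mod 2) mod 2 = z"
  using bit_cases[of x] bit_cases[of z] by auto

lemma mc5: "(x::nat) < 2 \<Longrightarrow> z < 2 \<Longrightarrow> ((x + z) mod 2 + x) mod 2 = z"
  using bit_cases[of x] bit_cases[of z] by auto

definition gg :: "nat \<Rightarrow> nat \<Rightarrow> nat \<Rightarrow> nat" where
  "gg p q i = (if i = 0 then (p + q) mod 2 else if odd i then p else q)"

lemma gg_lt: "p < 2 \<Longrightarrow> q < 2 \<Longrightarrow> gg p q i < 2"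
  by (auto simp: gg_def)

lemma gg_orth:
  assumes h: "h \<ge> 3" and i: "i < h" and pq: "p < 2" "q < 2" "p' < 2" "q' < 2" "(p, q) \<noteq> (p', q')"
  shows "\<not> (gg p q i = gg p' q' i \<and> gg p q (sc h i) = gg p' q' (sc h i))"
proof
  assume A: "gg p q i = gg p' q' i \<and> gg p q (sc h i) = gg p' q' (sc h i)"
  show False
  proof (cases "i = 0")
    case True
    have "sc h i = 1" using True h by (simp add: sc_def)
    then have A0: "gg p q 0 = gg p' q' 0" "gg p q 1 = gg p' q' 1" using A True by auto
    have "(p + q) mod 2 = (p' + q') mod 2" using A0(1) by (simp add: gg_def)
    moreover have "p = p'" using A0(2) by (simp add: gg_def)
    ultimately have "q = q'" using pq(1-4) mc1 by metis
    then show False using \<open>p = p'\<close> pq(5) by simp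
  next
    case i0: False
    from sc_cases[OF i] show False
    proof
      assume "i + 1 < h \<and> sc h i = i + 1"
      then have s: "sc h i = i + 1" by blast
      show False
      proof (cases "odd i")
        case True
        then have "p = p'" "q = q'" using A s i0 by (simp_all add: gg_def)
        then show False using pq by simp
      next
        case False
        then have "p = p'" "q = q'" using A s i0 by (simp_all add: gg_def)
        then show False using pq by simp
      qed
    next
      assume "i = h - 1 \<and> sc h i = 0"
      then have s: "sc h i = 0" by blast
      have m: "(p + q) mod 2 = (p' + q') mod 2" using A s by (simp add: gg_def)
      show False
      proof (cases "odd i")
        case True
        then have "p = p'" using A i0 by (simp add: gg_def)
        then have "q = q'" using pq(1-4) m mc1 by metis
        then show False using \<open>p = p'\<close> pq(5) by simp
      next
        case False
        then have "q = q'" using A i0 by (simp add: gg_def)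
        then have "p = p'" using pq(1-4) m mc2 \<open>q = q'\<close> by metis
        then show False using \<open>q = q'\<close> pq(5) by simp
      qed
    qed
  qed
qed

lemma gg_ex:
  assumes h: "h \<ge> 3" and i: "i < h" and xz: "x < 2" "z < 2"
  shows "\<exists>p<2. \<exists>q<2. gg p q i = x \<and> gg p q (sc h i) = z"
proof (cases "i = 0")
  case True
  have "sc h i = 1" using True h by (simp add: sc_def)
  then show ?thesis using True xz
    by (intro exI[of _ z] conjI exI[of _ "(x + z) mod 2"]) (auto simp: gg_def mc3)
next
  case i0: False
  from sc_cases[OF i] show ?thesis
  proof
    assume "i + 1 < h \<and> sc h i = i + 1"
    then have s: "sc h i = i + 1" by blast
    show ?thesis
    proof (cases "odd i")
      case True
      then show ?thesis using s i0 xz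
        by (intro exI[of _ x] conjI exI[of _ z]) (auto simp: gg_def)
    next
      case False
      then show ?thesis using s i0 xz
        by (intro exI[of _ z] conjI exI[of _ x]) (auto simp: gg_def)
    qed
  next
    assume "i = h - 1 \<and> sc h i = 0"
    then have s: "sc h i = 0" by blast
    show ?thesis
    proof (cases "odd i")
      case True
      then show ?thesis using s i0 xz
        by (intro exI[of _ x] conjI exI[of _ "(x + z) mod 2"]) (auto simp: gg_def mc4)
    next
      case False
      then show ?thesis using s i0 xz
        by (intro exI[of _ "(x + z) mod 2"] conjI exI[of _ x]) (auto simp: gg_def mc5)
    qed
  qed
qed


definition TT :: "nat \<Rightarrow> nat \<Rightarrow> (nat \<times> nat) set set" where
  "TT h c = {{(i,c),(sc h i,c)} | i. i < h} \<union> {{(i,c),(sc h i,1-c)} | i. i < h}"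

lemma TT_sun:
  assumes h: "h \<ge> 3" and c: "c < 2"
  shows "is_sun h (TT h c)"
  unfolding is_sun_def
proof (intro exI conjI)
  let ?as = "map (\<lambda>i. (i, c)) [0..<h]"
  let ?bs = "map (\<lambda>i. (sc h i, 1 - c)) [0..<h]"
  show "length ?as = h" "length ?bs = h" by auto
  have "inj_on (\<lambda>i. (sc h i, 1 - c)) (set [0..<h])"
    by (auto intro!: inj_onI dest: sc_inj)
  moreover have "c \<noteq> 1 - c" using c by arith
  then have "set ?as \<inter> set ?bs = {}" by auto
  moreover have "inj_on (\<lambda>i. (i, c)) (set [0..<h])" by (auto intro!: inj_onI)
  ultimately show "distinct (?as @ ?bs)" by (simp add: distinct_map)
  have e1: "{{?as ! i, ?as ! ((i + 1) mod h)} | i. i < h} = {{(i,c),(sc h i,c)} | i. i < h}"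
  proof -
    have "{{?as ! i, ?as ! ((i + 1) mod h)} | i. i < h} = (\<lambda>i. {?as ! i, ?as ! ((i + 1) mod h)}) ` {i. i < h}"
      by (rule image_Collect[symmetric])
    also have "\<dots> = (\<lambda>i. {(i,c),(sc h i,c)}) ` {i. i < h}"
    proof (rule image_cong)
      fix i assume "i \<in> {i. i < h}"
      then have "i < h" "(i + 1) mod h < h" using h by auto
      then show "{?as ! i, ?as ! ((i + 1) mod h)} = {(i,c),(sc h i,c)}" by (simp add: sc_def)
    qed simp
    also have "\<dots> = {{(i,c),(sc h i,c)} | i. i < h}" by (rule image_Collect)
    finally show ?thesis .
  qed
  have e2: "{{?as ! i, ?bs ! i} | i. i < h} = {{(i,c),(sc h i,1-c)} | i. i < h}"
  proof -
    have "{{?as ! i, ?bs ! i} | i. i < h} = (\<lambda>i. {?as ! i, ?bs ! i}) ` {i. i < h}"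
      by (rule image_Collect[symmetric])
    also have "\<dots> = (\<lambda>i. {(i,c),(sc h i,1-c)}) ` {i. i < h}"
      by (rule image_cong) auto
    also have "\<dots> = {{(i,c),(sc h i,1-c)} | i. i < h}" by (rule image_Collect)
    finally show ?thesis .
  qed
  show "TT h c = {{?as ! i, ?as ! ((i + 1) mod h)} | i. i < h} \<union> {{?as ! i, ?bs ! i} | i. i < h}"
    unfolding e1 e2 TT_def ..
qed

lemma TT_sub:
  assumes h: "h \<ge> 3" and c: "c < 2"
  shows "TT h c \<subseteq> cmn_edges h 2"
proof
  fix e assume "e \<in> TT h c"
  then obtain i y where "e = {(i,c),(sc h i,y)}" "i < h" "y < 2"
    unfolding TT_def using c by auto
  then show "e \<in> cmn_edges h 2" unfolding E_char[OF h] using c by blast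
qed

lemma TT_cover:
  assumes h: "h \<ge> 3" and c: "c < 2"
  shows "\<Union> (TT h c) = cmn_vertices h 2"
proof
  show "\<Union> (TT h c) \<subseteq> cmn_vertices h 2"
    using TT_sub[OF h c] unfolding E_char[OF h] cmn_vertices_def using sc_lt[OF h] by fastforce
next
  show "cmn_vertices h 2 \<subseteq> \<Union> (TT h c)"
  proof
    fix v assume "v \<in> cmn_vertices h 2"
    then obtain i x where v: "v = (i, x)" "i < h" "x < 2" by (auto simp: cmn_vertices_def)
    show "v \<in> \<Union> (TT h c)"
    proof (cases "x = c")
      case True
      then show ?thesis using v unfolding TT_def by blast
    next
      case False
      define j where "j = (i + h - 1) mod h"
      have j: "sc h j = i" "j < h" using sc_pred[OF h v(2)] j_def by auto
      have "x = 1 - c" using False c v(3) by auto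
      then have "v \<in> {(j,c),(sc h j,1-c)}" using j v by simp
      moreover have "{(j,c),(sc h j,1-c)} \<in> TT h c" using j unfolding TT_def by blast
      ultimately show ?thesis by blast
    qed
  qed
qed

lemma TT_class:
  assumes h: "h \<ge> 3" and c: "c < 2"
  shows "sun_class h (cmn_vertices h 2) (cmn_edges h 2) (TT h c)"
  unfolding sun_class_def
  by (rule exI[of _ "{TT h c}"]) (use TT_sun[OF h c] TT_sub[OF h c] TT_cover[OF h c] in auto)

lemma TT_disj:
  assumes h: "h \<ge> 3"
  shows "TT h 0 \<inter> TT h 1 = {}"
proof (rule ccontr)
  assume "TT h 0 \<inter> TT h 1 \<noteq> {}"
  then obtain e where e0: "e \<in> TT h 0" and e1: "e \<in> TT h 1" by blast
  from e1 obtain j where j: "j < h" "(j, 1) \<in> e" "e = {(j,1),(sc h j,1)} \<or> e = {(j,1),(sc h j,0)}"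
    unfolding TT_def by auto
  from e0 obtain i where i: "i < h" "e = {(i,0),(sc h i,0)} \<or> e = {(i,0),(sc h i,1)}"
    unfolding TT_def by auto
  have "e = {(i,0),(sc h i,1)}" using i j by auto
  then have "j = sc h i" using j by auto
  have "(i, 0) \<in> e" using \<open>e = {(i,0),(sc h i,1)}\<close> by simp
  then have "i = sc h j" using j(3) by auto
  then show False using no2[OF h i(1) j(1)] \<open>j = sc h i\<close> by blast
qed

lemma TT_union:
  assumes h: "h \<ge> 3"
  shows "TT h 0 \<union> TT h 1 = cmn_edges h 2"
proof
  show "TT h 0 \<union> TT h 1 \<subseteq> cmn_edges h 2" using TT_sub[OF h] by auto
next
  show "cmn_edges h 2 \<subseteq> TT h 0 \<union> TT h 1"
  proof
    fix e assume "e \<in> cmn_edges h 2"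
    then obtain i x y where e: "e = {(i,x),(sc h i,y)}" "i < h" "x < 2" "y < 2"
      unfolding E_char[OF h] by auto
    have "x = 0 \<or> x = 1" "y = 0 \<or> y = 1" using e by auto
    then show "e \<in> TT h 0 \<union> TT h 1" using e unfolding TT_def by auto
  qed
qed


definition MM :: "nat \<Rightarrow> nat \<Rightarrow> (nat \<times> nat) set set" where
  "MM h k = medge h (gg (k div 2) (k mod 2)) ` {..<h}"

lemma case02:
  assumes h: "h \<ge> 3"
  shows "urgdd h 0 2 (cmn_vertices h 2) (cmn_edges h 2)"
proof -
  have A: "\<forall>S\<in>set [TT h 0, TT h 1]. sun_class h (cmn_vertices h 2) (cmn_edges h 2) S"
    using TT_class[OF h, of 0] TT_class[OF h, of 1] by simp
  have B: "\<forall>i<2. \<forall>j<2. i \<noteq> j \<longrightarrow> [TT h 0, TT h 1] ! i \<inter> [TT h 0, TT h 1] ! j = {}"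
  proof (intro allI impI)
    fix i j :: nat assume "i < 2" "j < 2" "i \<noteq> j"
    then have "(i = 0 \<and> j = 1) \<or> (i = 1 \<and> j = 0)" by auto
    then show "[TT h 0, TT h 1] ! i \<inter> [TT h 0, TT h 1] ! j = {}"
      using TT_disj[OF h] by auto
  qed
  have C: "\<Union> (set [TT h 0, TT h 1]) = cmn_edges h 2" using TT_union[OF h] by simp
  show ?thesis unfolding urgdd_def
    by (rule exI[of _ "[]"], rule exI[of _ "[TT h 0, TT h 1]"]) (use A B C in simp)
qed

lemma case40:
  assumes h: "h \<ge> 3"
  shows "urgdd h 4 0 (cmn_vertices h 2) (cmn_edges h 2)"
proof -
  have A: "\<forall>M\<in>set (map (MM h) [0..<4]). perfect_matching (cmn_vertices h 2) (cmn_edges h 2) M"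
  proof
    fix M assume "M \<in> set (map (MM h) [0..<4])"
    then obtain k where k: "M = MM h k" "k < 4" by auto
    then have "k div 2 < 2" "k mod 2 < 2" by auto
    then show "perfect_matching (cmn_vertices h 2) (cmn_edges h 2) M"
      unfolding k MM_def by (intro pm[OF h] gg_lt)
  qed
  have B: "\<forall>i<4. \<forall>j<4. i \<noteq> j \<longrightarrow> (map (MM h) [0..<4]) ! i \<inter> (map (MM h) [0..<4]) ! j = {}"
  proof (intro allI impI)
    fix i j :: nat assume ij: "i < 4" "j < 4" "i \<noteq> j"
    have ne: "(i div 2, i mod 2) \<noteq> (j div 2, j mod 2)"
    proof
      assume "(i div 2, i mod 2) = (j div 2, j mod 2)"
      then have "2 * (i div 2) + i mod 2 = 2 * (j div 2) + j mod 2" by simp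
      then show False using ij(3) by simp
    qed
    have lt: "i div 2 < 2" "i mod 2 < 2" "j div 2 < 2" "j mod 2 < 2" using ij by auto
    have "MM h i \<inter> MM h j = {}" unfolding MM_def
      by (rule pm_disj[OF h]) (use gg_lt lt gg_orth[OF h _ lt ne] in auto)
    then show "(map (MM h) [0..<4]) ! i \<inter> (map (MM h) [0..<4]) ! j = {}"
      using ij by simp
  qed
  have C: "\<Union> (set (map (MM h) [0..<4])) = cmn_edges h 2"
  proof
    show "\<Union> (set (map (MM h) [0..<4])) \<subseteq> cmn_edges h 2"
    proof
      fix e assume "e \<in> \<Union> (set (map (MM h) [0..<4]))"
      then obtain k where "e \<in> MM h k" "k < 4" by auto
      moreover have "k div 2 < 2" "k mod 2 < 2" using \<open>k < 4\<close> by auto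
      then have "MM h k \<subseteq> cmn_edges h 2"
        using pm[OF h, of "gg (k div 2) (k mod 2)"] gg_lt unfolding MM_def perfect_matching_def by auto
      ultimately show "e \<in> cmn_edges h 2" by blast
    qed
  next
    show "cmn_edges h 2 \<subseteq> \<Union> (set (map (MM h) [0..<4]))"
    proof
      fix e assume "e \<in> cmn_edges h 2"
      then obtain i x y where e: "e = {(i,x),(sc h i,y)}" "i < h" "x < 2" "y < 2"
        unfolding E_char[OF h] by auto
      have "1 - y < (2::nat)" by simp
      then have "\<exists>p<2. \<exists>q<2. gg p q i = x \<and> gg p q (sc h i) = 1 - y"
        by (rule gg_ex[OF h e(2) e(3)])
      then obtain p q where pq: "p < 2" "q < 2" "gg p q i = x" "gg p q (sc h i) = 1 - y"
        by blast
      have "1 - (1 - y) = y" using e(4) by arith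
      then have "e = medge h (gg p q) i" using e pq unfolding medge_def by simp
      moreover have "(2 * p + q) div 2 = p" "(2 * p + q) mod 2 = q" using pq by auto
      ultimately have "e \<in> MM h (2 * p + q)" unfolding MM_def using e(2) by auto
      moreover have "2 * p + q < 4" using pq by auto
      ultimately show "e \<in> \<Union> (set (map (MM h) [0..<4]))" by auto
    qed
  qed
  show ?thesis unfolding urgdd_def
    by (rule exI[of _ "map (MM h) [0..<4]"], rule exI[of _ "[]"]) (use A B C in simp)
qed

theorem lemma3p3:
  fixes h r s :: nat
  assumes "h \<ge> 3" and "(r, s) \<in> {(0, 2), (4, 0)}"
  shows "urgdd h r s (cmn_vertices h 2) (cmn_edges h 2)"
  using assms case02 case40 by auto

end
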